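(* Let $p$ be an odd prime and $\lambda$ a nonempty BG-partition. The following are equivalent: (1) $\varepsilon^*_\lambda=0$; (2) $a^*_\lambda$ is even; (3) $\mathrm{Rim}^*_p(\lambda)$ contains no diagonal node $(i,i)$; (4) $p\mid a^*_\lambda$.
   Context: Partitions: $\lambda=(\lambda_1\ge\lambda_2\ge\cdots)$ with finitely many nonzero parts; $l(\lambda)$ = number of nonzero parts; Young diagram $[\lambda]=\{(i,j): i\ge1, 1\le j\le\lambda_i\}$ ($i$ = row, increasing downward). $\lambda'$ is the conjugate; self-conjugate means $\lambda=\lambda'$. $k(\lambda)=\max\{i:\lambda_i\ge i\}$; diagonal nodes are $(i,i)$, $1\le i\le k(\lambda)$; hook length $h_{ij}=\lambda_i+\lambda'_j-i-j+1$. A BG-partition is a self-conjugate partition with $p\nmid h_{ii}$ for all $1\le i\le k(\lambda)$. Rim and $p$-rim: the rim is the set of nodes $(i,j)\in[\lambda]$ with $(i+1,j+1)\notin[\lambda]$. Label rim nodes $1,2,\dots$ along the rim path from $(1,\lambda_1)$ to $(l(\lambda),1)$. The first $p$-segment is the rim nodes labelled $1,\dots,p$ (or all if fewer). If the last node $(i,j)$ of a $p$-segment lies in the last row, stop; otherwise with $l$ the smallest label in row $i+1$ the next $p$-segment is the rim nodes labelled $l,\dots,l+p-1$ (or up to the last). The $p$-rim is the union of the $p$-segments. $p$-rim*: $U_\lambda=\{(i,j)\in p\text{-rim of }\lambda: i\le j\}$, $L_\lambda=\{(j,i):(i,j)\in U_\lambda\}$, $\mathrm{Rim}^*_p(\lambda)=U_\lambda\cup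 L_\lambda$, $a^*_\lambda=\#\mathrm{Rim}^*_p(\lambda)$, $\varepsilon^*_\lambda=a^*_\lambda\bmod 2$. *)

theory Defs
  imports "HOL-Computational_Algebra.Primes"
begin

text \<open>A partition is a weakly decreasing list of positive naturals;
  part lam i is lambda_i (1-indexed, 0 beyond the length).\<close>

definition is_partition :: "nat list \<Rightarrow> bool" where
  "is_partition lam \<longleftrightarrow> sorted_wrt (\<ge>) lam \<and> 0 \<notin> set lam"

definition part :: "nat list \<Rightarrow> nat \<Rightarrow> nat" where
  "part lam i = (if 1 \<le> i \<and> i \<le> length lam then lam ! (i - 1) else 0)"

definition len :: "nat list \<Rightarrow> nat" where
  "len lam = card {i. 1 \<le> i \<and> part lam i \<noteq> 0}"

definition diagram :: "nat list \<Rightarrow> (nat \<times> nat) set" where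
  "diagram lam = {(i, j). 1 \<le> i \<and> 1 \<le> j \<and> j \<le> part lam i}"

definition conj_part :: "nat list \<Rightarrow> nat \<Rightarrow> nat" where
  "conj_part lam j = card {i. 1 \<le> i \<and> j \<le> part lam i}"

definition self_conjugate :: "nat list \<Rightarrow> bool" where
  "self_conjugate lam \<longleftrightarrow> (\<forall>j\<ge>1. conj_part lam j = part lam j)"

definition kdiag :: "nat list \<Rightarrow> nat" where
  "kdiag lam = Max {i. 1 \<le> i \<and> i \<le> part lam i}"

definition hook :: "nat list \<Rightarrow> nat \<Rightarrow> nat \<Rightarrow> int" where
  "hook lam i j = int (part lam i) + int (conj_part lam j) - int i - int j + 1"

definition BG_partition :: "nat \<Rightarrow> nat list \<Rightarrow> bool" where
  "BG_partition p lam \<longleftrightarrow> is_partition lam \<and> self_conjugate lam \<and>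
     (\<forall>i. 1 \<le> i \<and> i \<le> kdiag lam \<longrightarrow> \<not> int p dvd hook lam i i)"

definition rim :: "nat list \<Rightarrow> (nat \<times> nat) set" where
  "rim lam = {(i, j) \<in> diagram lam. (i + 1, j + 1) \<notin> diagram lam}"

text \<open>Order of the rim path from (1, lambda_1) to (l, 1): down the rows,
  and right-to-left within a row.\<close>
definition path_before :: "nat \<times> nat \<Rightarrow> nat \<times> nat \<Rightarrow> bool" where
  "path_before a b \<longleftrightarrow> fst a < fst b \<or> (fst a = fst b \<and> snd a > snd b)"

definition rim_list :: "nat list \<Rightarrow> (nat \<times> nat) list" where
  "rim_list lam = (THE L. distinct L \<and> set L = rim lam \<and> sorted_wrt path_before L)"

text \<open>Rim node with label m (labels start at 1).\<close>
definition rim_node :: "nat list \<Rightarrow> nat \<Rightarrow> nat \<times> nat" where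
  "rim_node lam m = rim_list lam ! (m - 1)"

definition rim_size :: "nat list \<Rightarrow> nat" where
  "rim_size lam = length (rim_list lam)"

text \<open>Label of the last node of the p-segment starting at label s.\<close>
definition seg_end :: "nat \<Rightarrow> nat list \<Rightarrow> nat \<Rightarrow> nat" where
  "seg_end p lam s = min (s + p - 1) (rim_size lam)"

inductive seg_start :: "nat \<Rightarrow> nat list \<Rightarrow> nat \<Rightarrow> bool" for p lam where
  first: "rim_size lam \<ge> 1 \<Longrightarrow> seg_start p lam 1"
| step: "seg_start p lam s \<Longrightarrow> fst (rim_node lam (seg_end p lam s)) < len lam \<Longrightarrow>
         seg_start p lam (LEAST m. 1 \<le> m \<and> m \<le> rim_size lam \<and>
            fst (rim_node lam m) = fst (rim_node lam (seg_end p lam s)) + 1)"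

definition p_rim :: "nat \<Rightarrow> nat list \<Rightarrow> (nat \<times> nat) set" where
  "p_rim p lam = {rim_node lam m | m. \<exists>s. seg_start p lam s \<and> s \<le> m \<and> m \<le> seg_end p lam s}"

definition U_set :: "nat \<Rightarrow> nat list \<Rightarrow> (nat \<times> nat) set" where
  "U_set p lam = {(i, j) \<in> p_rim p lam. i \<le> j}"

definition L_set :: "nat \<Rightarrow> nat list \<Rightarrow> (nat \<times> nat) set" where
  "L_set p lam = {(j, i) | i j. (i, j) \<in> U_set p lam}"

definition rim_star :: "nat \<Rightarrow> nat list \<Rightarrow> (nat \<times> nat) set" where
  "rim_star p lam = U_set p lam \<union> L_set p lam"

definition a_star :: "nat \<Rightarrow> nat list \<Rightarrow> nat" where
  "a_star p lam = card (rim_star p lam)"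

definition eps_star :: "nat \<Rightarrow> nat list \<Rightarrow> nat" where
  "eps_star p lam = a_star p lam mod 2"

end

theory Submission
  imports Defs
begin

locale ptn =
  fixes lam :: "nat list"
  assumes isp: "is_partition lam" and ne: "lam \<noteq> []"
begin

definition l1 where "l1 = part lam 1"
definition NN where "NN = l1 + length lam - 1"
definition lab :: "nat \<times> nat \<Rightarrow> nat" where "lab c = l1 + fst c - snd c"
definition nodeof :: "nat \<Rightarrow> nat \<times> nat" where
  "nodeof d = (SOME c. c \<in> rim lam \<and> lab c = d)"

lemma part_mono:
  assumes "1 \<le> i" "i \<le> i'" shows "part lam i' \<le> part lam i"
proof (cases "i' \<le> length lam")
  case True
  then show ?thesis
  proof (cases "i = i'")
    case False
    have "sorted_wrt (\<ge>) lam" using isp by (simp add: is_partition_def)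
    then have "lam ! (i-1) \<ge> lam ! (i'-1)"
      using assms True False by (auto simp: sorted_wrt_iff_nth_less)
    then show ?thesis using assms True by (simp add: part_def)
  qed simp
next
  case False
  then show ?thesis by (simp add: part_def)
qed

lemma part_pos: "1 \<le> i \<Longrightarrow> i \<le> length lam \<Longrightarrow> 1 \<le> part lam i"
proof -
  assume a: "1 \<le> i" "i \<le> length lam"
  then have "lam ! (i-1) \<in> set lam" by simp
  then have "lam ! (i-1) \<noteq> 0" using isp by (metis is_partition_def)
  then show ?thesis using a by (simp add: part_def)
qed

lemma part_zero: "length lam < i \<Longrightarrow> part lam i = 0"
  by (simp add: part_def)

lemma len_eq: "len lam = length lam"
proof -
  have "{i. 1 \<le> i \<and> part lam i \<noteq> 0} = {1..length lam}"
    using part_pos part_zero by (force simp: not_less)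
  then show ?thesis by (simp add: len_def)
qed

lemma l1_pos: "1 \<le> l1"
  using part_pos[of 1] ne by (simp add: l1_def Suc_le_eq)

lemma part_le_l1: "1 \<le> i \<Longrightarrow> part lam i \<le> l1"
  using part_mono[of 1 i] by (simp add: l1_def)

lemma rim_iff: "c \<in> rim lam \<longleftrightarrow> 1 \<le> fst c \<and> 1 \<le> snd c \<and> snd c \<le> part lam (fst c)
   \<and> part lam (fst c + 1) \<le> snd c"
  by (cases c) (auto simp: rim_def diagram_def)

lemma rim_props:
  assumes "c \<in> rim lam"
  shows "1 \<le> lab c" "lab c \<le> NN" "fst c \<le> length lam" "snd c \<le> l1" "1 \<le> fst c"
proof -
  have a: "1 \<le> fst c" "1 \<le> snd c" "snd c \<le> part lam (fst c)" using assms rim_iff by auto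
  show "fst c \<le> length lam" using a part_zero by (metis not_less not_one_le_zero order_trans)
  show "snd c \<le> l1" using a part_le_l1 by (meson order_trans)
  show "1 \<le> lab c" using a \<open>snd c \<le> l1\<close> by (simp add: lab_def)
  show "lab c \<le> NN" using a \<open>snd c \<le> l1\<close> \<open>fst c \<le> length lam\<close> by (simp add: lab_def NN_def)
  show "1 \<le> fst c" using a by simp
qed

lemma lab_lt_row:
  assumes "c \<in> rim lam" "d \<in> rim lam" "fst c < fst d"
  shows "lab c < lab d"
proof -
  have "part lam (fst d) \<le> part lam (fst c + 1)"
    using assms part_mono[of "fst c + 1" "fst d"] by simp
  then have "snd d \<le> snd c" using assms rim_iff by (meson order_trans)
  then show ?thesis using assms rim_props[of c] rim_props[of d] by (simp add: lab_def)
qed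

lemma path_lab:
  assumes "c \<in> rim lam" "d \<in> rim lam"
  shows "path_before c d \<longleftrightarrow> lab c < lab d"
proof
  assume "path_before c d"
  then show "lab c < lab d" using lab_lt_row[OF assms] rim_props[OF assms(1)] rim_props[OF assms(2)]
    by (auto simp: path_before_def lab_def)
next
  assume h: "lab c < lab d"
  show "path_before c d"
  proof (cases "fst c = fst d")
    case True then show ?thesis using h rim_props[OF assms(1)] rim_props[OF assms(2)]
      by (auto simp: path_before_def lab_def)
  next
    case False
    then have "fst c < fst d \<or> fst d < fst c" by auto
    then show ?thesis using lab_lt_row[OF assms(2,1)] h by (auto simp: path_before_def)
  qed
qed

lemma lab_inj: "inj_on lab (rim lam)"
proof (rule inj_onI)
  fix c d assume a: "c \<in> rim lam" "d \<in> rim lam" "lab c = lab d"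
  then have "fst c = fst d" using lab_lt_row[of c d] lab_lt_row[of d c] by (metis less_irrefl nat_neq_iff)
  then show "c = d" using a rim_props[of c] rim_props[of d] by (simp add: lab_def prod_eq_iff)
qed

lemma contig:
  assumes "1 \<le> d" "d \<le> NN"
  shows "\<exists>c\<in>rim lam. lab c = d"
proof -
  define I where "I = {i. 1 \<le> i \<and> i \<le> length lam \<and> l1 + i \<le> d + part lam i}"
  have "1 \<in> I" using assms ne by (simp add: I_def l1_def Suc_le_eq)
  have fin: "finite I" by (simp add: I_def)
  define i where "i = Max I"
  have iI: "i \<in> I" unfolding i_def by (rule Max_in) (use fin \<open>1 \<in> I\<close> in auto)
  have imax: "\<And>i'. i' \<in> I \<Longrightarrow> i' \<le> i" using fin by (simp add: i_def)
  define j where "j = l1 + i - d"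
  have j1: "j \<le> part lam i" using iI unfolding I_def j_def by simp arith
  have j2: "1 \<le> j \<and> part lam (i+1) \<le> j"
  proof (cases "i < length lam")
    case True
    then have "i + 1 \<notin> I" using imax by fastforce
    then have "d + part lam (i+1) < l1 + i + 1" using True iI by (simp add: I_def)
    moreover have "1 \<le> part lam (i+1)" using True part_pos by simp
    ultimately show ?thesis unfolding j_def by arith
  next
    case False
    then have "i = length lam" using iI by (simp add: I_def)
    then show ?thesis using assms part_zero[of "i+1"] by (simp add: j_def NN_def)
  qed
  have "(i, j) \<in> rim lam" using rim_iff iI j1 j2 by (simp add: I_def)
  moreover have "lab (i, j) = d"
    using j2 unfolding lab_def j_def by simp arith
  ultimately show ?thesis by blast
qed

lemma nodeof_props:
  assumes "1 \<le> d" "d \<le> NN"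
  shows "nodeof d \<in> rim lam" "lab (nodeof d) = d"
proof -
  have "\<exists>c. c \<in> rim lam \<and> lab c = d" using contig[OF assms] by blast
  then have "nodeof d \<in> rim lam \<and> lab (nodeof d) = d" unfolding nodeof_def by (rule someI_ex)
  then show "nodeof d \<in> rim lam" "lab (nodeof d) = d" by auto
qed

lemma nodeof_lab: "c \<in> rim lam \<Longrightarrow> nodeof (lab c) = c"
  using nodeof_props[of "lab c"] rim_props[of c] lab_inj by (meson inj_on_eq_iff)

lemma rim_list_eq: "rim_list lam = map nodeof [1..<NN+1]"
  unfolding rim_list_def
proof (rule the_equality)
  let ?L = "map nodeof [1..<NN+1]"
  have inj: "inj_on nodeof {1..<NN+1}"
    by (rule inj_on_inverseI[where g=lab]) (use nodeof_props in auto)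
  show "distinct ?L \<and> set ?L = rim lam \<and> sorted_wrt path_before ?L"
  proof (intro conjI)
    have "distinct [1..<NN+1]" by simp
    then show "distinct ?L" using inj distinct_map set_upt by metis
    show "set ?L = rim lam"
    proof
      show "set ?L \<subseteq> rim lam" using nodeof_props by auto
      show "rim lam \<subseteq> set ?L"
      proof
        fix c assume "c \<in> rim lam"
        then have "c = nodeof (lab c)" "lab c \<in> {1..<NN+1}" using nodeof_lab[of c] rim_props[of c] by auto
        then show "c \<in> set ?L" by (metis image_eqI set_map set_upt)
      qed
    qed
    show "sorted_wrt path_before ?L"
      unfolding sorted_wrt_map
    proof (rule sorted_wrt_mono_rel[OF _ sorted_wrt_upt])
      fix x y assume xy: "x \<in> set [1..<NN+1]" "y \<in> set [1..<NN+1]" "x < y"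
      then have "1 \<le> x" "x \<le> NN" "1 \<le> y" "y \<le> NN" by auto
      then show "path_before (nodeof x) (nodeof y)"
        using path_lab nodeof_props xy(3) by metis
    qed
  qed
  fix L assume h: "distinct L \<and> set L = rim lam \<and> sorted_wrt path_before L"
  have s1: "sorted_wrt (<) (map lab L)"
    unfolding sorted_wrt_map
    by (rule sorted_wrt_mono_rel[of _ path_before]) (use h path_lab in auto)
  have s2: "set (map lab L) = {1..<NN+1}"
  proof -
    have "lab ` rim lam = {1..<NN+1}"
    proof
      show "lab ` rim lam \<subseteq> {1..<NN+1}" using rim_props by fastforce
      show "{1..<NN+1} \<subseteq> lab ` rim lam" using contig by force
    qed
    then show ?thesis using h by simp
  qed
  have "map lab L = [1..<NN+1]"
    using s1 s2 by (metis sorted_distinct_set_unique strict_sorted_iff set_upt sorted_wrt_upt)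
  then have "map nodeof (map lab L) = ?L" by simp
  moreover have "map nodeof (map lab L) = L"
    unfolding map_map by (rule map_idI) (use h nodeof_lab in simp)
  ultimately show "L = ?L" by simp
qed

lemma rim_size_eq: "rim_size lam = NN"
  by (simp add: rim_size_def rim_list_eq)

lemma rim_node_eq: "1 \<le> m \<Longrightarrow> m \<le> NN \<Longrightarrow> rim_node lam m = nodeof m"
  by (simp add: rim_node_def rim_list_eq del: upt_Suc)

lemma NN_pos: "1 \<le> NN"
  using l1_pos ne unfolding NN_def by (cases lam) auto

lemma row_first:
  assumes "1 \<le> i" "i \<le> length lam"
  shows "(i, part lam i) \<in> rim lam" "lab (i, part lam i) = l1 + i - part lam i"
  using assms part_pos part_mono[of i "i+1"] by (auto simp: rim_iff lab_def)

lemma nx_eq: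
  assumes "1 \<le> e" "e \<le> NN" "fst (nodeof e) < length lam"
  shows "(LEAST m. 1 \<le> m \<and> m \<le> rim_size lam \<and> fst (rim_node lam m) = fst (nodeof e) + 1)
           = lab (fst (nodeof e) + 1, part lam (fst (nodeof e) + 1))"
    and "e < lab (fst (nodeof e) + 1, part lam (fst (nodeof e) + 1))"
proof -
  let ?r = "fst (nodeof e)"
  let ?c = "(?r + 1, part lam (?r + 1))"
  have cr: "?c \<in> rim lam" using row_first[of "?r+1"] assms by simp
  have ne: "nodeof e \<in> rim lam" "lab (nodeof e) = e" using nodeof_props assms by auto
  show "(LEAST m. 1 \<le> m \<and> m \<le> rim_size lam \<and> fst (rim_node lam m) = ?r + 1) = lab ?c"
  proof (rule Least_equality)
    show "1 \<le> lab ?c \<and> lab ?c \<le> rim_size lam \<and> fst (rim_node lam (lab ?c)) = ?r + 1"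
      using cr rim_props[OF cr] rim_node_eq nodeof_lab rim_size_eq by simp
  next
    fix m assume m: "1 \<le> m \<and> m \<le> rim_size lam \<and> fst (rim_node lam m) = ?r + 1"
    then have "m \<le> NN" by (simp add: rim_size_eq)
    then have nm: "nodeof m \<in> rim lam" "lab (nodeof m) = m" "fst (nodeof m) = ?r + 1"
      using nodeof_props m rim_node_eq by auto
    then have "snd (nodeof m) \<le> part lam (?r+1)" using rim_iff by metis
    then show "lab ?c \<le> m" using nm(2,3) rim_props[OF nm(1)] part_le_l1[of "?r+1"]
      unfolding lab_def by simp
  qed
  have "part lam (?r+1) \<le> snd (nodeof e)" using ne rim_iff by metis
  then show "e < lab ?c" using ne rim_props[OF ne(1)] part_le_l1[of "?r+1"]
    unfolding lab_def by simp
qed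

context
  fixes p :: nat
  assumes p1: "1 \<le> p"
begin

lemma seg_end_props:
  assumes "1 \<le> s" "s \<le> NN"
  shows "s \<le> seg_end p lam s" "seg_end p lam s \<le> NN"
  using assms p1 by (auto simp: seg_end_def rim_size_eq)

lemma start_form:
  assumes "seg_start p lam s"
  shows "\<exists>i. 1 \<le> i \<and> i \<le> length lam \<and> s = l1 + i - part lam i"
  using assms
proof induction
  case first
  then show ?case using ne by (intro exI[of _ 1]) (auto simp: l1_def Suc_le_eq)
next
  case (step s)
  then obtain i where i: "1 \<le> i" "i \<le> length lam" "s = l1 + i - part lam i" by blast
  have s1: "1 \<le> s" "s \<le> NN" using row_first[OF i(1,2)] rim_props i(3) by metis+
  define e where "e = seg_end p lam s"
  have e: "1 \<le> e" "e \<le> NN" using seg_end_props[OF s1] s1 by (auto simp: e_def)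
  have r: "fst (nodeof e) < length lam" using step(2) rim_node_eq[OF e] len_eq by (simp add: e_def)
  have "(LEAST m. 1 \<le> m \<and> m \<le> rim_size lam \<and> fst (rim_node lam m) =
          fst (rim_node lam (seg_end p lam s)) + 1) = lab (fst (nodeof e) + 1, part lam (fst (nodeof e) + 1))"
    using nx_eq(1)[OF e r] rim_node_eq[OF e] by (simp add: e_def)
  then show ?case using row_first[of "fst (nodeof e) + 1"] r
    by (intro exI[of _ "fst (nodeof e) + 1"]) simp
qed

lemma start_range:
  assumes "seg_start p lam s"
  shows "1 \<le> s" "s \<le> NN" "s \<le> seg_end p lam s" "seg_end p lam s \<le> NN"
proof -
  obtain i where i: "1 \<le> i" "i \<le> length lam" "s = l1 + i - part lam i"
    using start_form[OF assms] by blast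
  show s1: "1 \<le> s" "s \<le> NN" using row_first[OF i(1,2)] rim_props i(3) by metis+
  show "s \<le> seg_end p lam s" "seg_end p lam s \<le> NN" using seg_end_props[OF s1] by auto
qed

definition nx :: "nat \<Rightarrow> nat" where
  "nx s = (LEAST m. 1 \<le> m \<and> m \<le> rim_size lam \<and>
            fst (rim_node lam m) = fst (rim_node lam (seg_end p lam s)) + 1)"

lemma nx_gt:
  assumes "seg_start p lam s" "fst (rim_node lam (seg_end p lam s)) < len lam"
  shows "seg_end p lam s < nx s"
proof -
  define e where "e = seg_end p lam s"
  have e: "1 \<le> e" "e \<le> NN" using start_range[OF assms(1)] by (auto simp: e_def)
  have r: "fst (nodeof e) < length lam" using assms(2) rim_node_eq[OF e] len_eq by (simp add: e_def)
  show ?thesis using nx_eq[OF e r] rim_node_eq[OF e] unfolding nx_def e_def[symmetric] by simp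
qed

definition fseq :: "nat \<Rightarrow> nat" where "fseq k = (nx ^^ k) 1"

definition valid :: "nat \<Rightarrow> bool" where
  "valid k \<longleftrightarrow> (\<forall>j<k. fst (rim_node lam (seg_end p lam (fseq j))) < len lam)"

lemma start_seq: "seg_start p lam s \<Longrightarrow> \<exists>k. s = fseq k \<and> valid k"
proof (induction rule: seg_start.induct)
  case first
  then show ?case by (intro exI[of _ 0]) (simp add: fseq_def valid_def)
next
  case (step s)
  then obtain k where k: "s = fseq k" "valid k" by blast
  have "nx s = fseq (Suc k)" using k by (simp add: fseq_def)
  moreover have "fst (rim_node lam (seg_end p lam (fseq k))) < len lam" using k(1) step(2) by simp
  then have "valid (Suc k)" using k(2) by (auto simp: valid_def less_Suc_eq)
  ultimately show ?case unfolding nx_def by metis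
qed

lemma seq_start: "valid k \<Longrightarrow> seg_start p lam (fseq k)"
proof (induction k)
  case 0
  then show ?case using NN_pos seg_start.first[of lam p] by (simp add: fseq_def rim_size_eq)
next
  case (Suc k)
  then have v: "valid k" and r: "fst (rim_node lam (seg_end p lam (fseq k))) < len lam"
    by (auto simp: valid_def)
  have "seg_start p lam (nx (fseq k))"
    unfolding nx_def by (rule seg_start.step[OF Suc.IH[OF v] r])
  then show ?case by (simp add: fseq_def)
qed

lemma seq_sep: "valid k \<Longrightarrow> j < k \<Longrightarrow> seg_end p lam (fseq j) < fseq k"
proof (induction k)
  case 0
  then show ?case by simp
next
  case (Suc k)
  then have v: "valid k" and r: "fst (rim_node lam (seg_end p lam (fseq k))) < len lam"
    by (auto simp: valid_def)
  have gt: "seg_end p lam (fseq k) < fseq (Suc k)"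
    using nx_gt[OF seq_start[OF v] r] by (simp add: fseq_def)
  show ?case
  proof (cases "j = k")
    case True then show ?thesis using gt by simp
  next
    case False
    then have "seg_end p lam (fseq j) < fseq k" using Suc v by simp
    moreover have "fseq k \<le> seg_end p lam (fseq k)" using start_range(3)[OF seq_start[OF v]] .
    ultimately show ?thesis using gt by simp
  qed
qed

lemma disj:
  assumes "seg_start p lam s" "seg_start p lam t" "s < t"
  shows "seg_end p lam s < t"
proof -
  obtain j where j: "s = fseq j" "valid j" using start_seq[OF assms(1)] by blast
  obtain k where k: "t = fseq k" "valid k" using start_seq[OF assms(2)] by blast
  consider "j < k" | "j = k" | "k < j" by linarith
  then show ?thesis
  proof cases
    case 1 then show ?thesis using seq_sep[OF k(2)] j k by simp
  next
    case 2 then show ?thesis using assms j k by simp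
  next
    case 3
    then have "seg_end p lam t < s" using seq_sep[OF j(2)] j k by simp
    then show ?thesis using start_range(3)[OF assms(2)] assms(3) by simp
  qed
qed

definition MM :: "nat set" where
  "MM = {m. \<exists>s. seg_start p lam s \<and> s \<le> m \<and> m \<le> seg_end p lam s}"

lemma MM_sub: "MM \<subseteq> {1..NN}"
  using start_range by (force simp: MM_def)

lemma full:
  assumes "seg_start p lam t" "seg_end p lam t = x" "x < NN"
  shows "x + 1 - t = p"
  using assms p1 start_range[OF assms(1)] by (auto simp: seg_end_def rim_size_eq min_def split: if_splits)

lemma count:
  "x \<le> NN \<Longrightarrow>
   (\<forall>s. seg_start p lam s \<and> s \<le> x \<and> x \<le> seg_end p lam s \<longrightarrow>
        card (MM \<inter> {1..x}) mod p = (x + 1 - s) mod p) \<and>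
   ((\<forall>s. seg_start p lam s \<longrightarrow> \<not> (s \<le> x \<and> x \<le> seg_end p lam s)) \<longrightarrow>
        card (MM \<inter> {1..x}) mod p = 0)"
proof (induction x)
  case 0
  then show ?case using start_range by fastforce
next
  case (Suc x)
  let ?C = "card (MM \<inter> {1..x})"
  have IH: "\<And>s. seg_start p lam s \<Longrightarrow> s \<le> x \<Longrightarrow> x \<le> seg_end p lam s \<Longrightarrow> ?C mod p = (x + 1 - s) mod p"
    "(\<forall>s. seg_start p lam s \<longrightarrow> \<not> (s \<le> x \<and> x \<le> seg_end p lam s)) \<Longrightarrow> ?C mod p = 0"
    using Suc by auto
  have xN: "x < NN" using Suc.prems by simp
  have set_eq: "MM \<inter> {1..Suc x} = (MM \<inter> {1..x}) \<union> (if Suc x \<in> MM then {Suc x} else {})"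
    by (auto simp: le_Suc_eq)
  have cardC: "card (MM \<inter> {1..Suc x}) = ?C + (if Suc x \<in> MM then 1 else 0)"
    unfolding set_eq by (auto simp: card_insert_if)
  have prev0: "?C mod p = 0" if nox: "\<forall>s. seg_start p lam s \<longrightarrow> \<not> (s \<le> x \<and> x \<le> seg_end p lam s) \<or> seg_end p lam s = x"
  proof (cases "\<exists>t. seg_start p lam t \<and> t \<le> x \<and> x \<le> seg_end p lam t")
    case True
    then obtain t where t: "seg_start p lam t" "t \<le> x" "x \<le> seg_end p lam t" by blast
    then have "seg_end p lam t = x" using nox by auto
    then have "x + 1 - t = p" using full[OF t(1) _ xN] by simp
    then show ?thesis using IH(1)[OF t] by simp
  next
    case False
    then show ?thesis using IH(2) by blast
  qed
  show ?case
  proof (intro conjI allI impI)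
    fix s assume s: "seg_start p lam s \<and> s \<le> Suc x \<and> Suc x \<le> seg_end p lam s"
    then have inM: "Suc x \<in> MM" by (auto simp: MM_def)
    show "card (MM \<inter> {1..Suc x}) mod p = (Suc x + 1 - s) mod p"
    proof (cases "s \<le> x")
      case True
      then have "?C mod p = (x + 1 - s) mod p" using IH(1) s by simp
      moreover have "Suc x + 1 - s = (x + 1 - s) + 1" using True by simp
      moreover have "card (MM \<inter> {1..Suc x}) = ?C + 1" using cardC inM by simp
      ultimately show ?thesis by (metis mod_add_left_eq)
    next
      case False
      then have sx: "s = Suc x" using s by simp
      have "?C mod p = 0"
      proof (rule prev0, intro allI impI)
        fix t assume t: "seg_start p lam t"
        show "\<not> (t \<le> x \<and> x \<le> seg_end p lam t) \<or> seg_end p lam t = x"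
        proof (cases "t \<le> x")
          case True
          then have "seg_end p lam t < Suc x" using disj[OF t] s sx by simp
          then show ?thesis by simp
        qed simp
      qed
      moreover have "card (MM \<inter> {1..Suc x}) = ?C + 1" using cardC inM by simp
      ultimately have "card (MM \<inter> {1..Suc x}) mod p = 1 mod p" by (metis mod_add_left_eq add_0)
      then show ?thesis using sx by simp
    qed
  next
    assume no: "\<forall>s. seg_start p lam s \<longrightarrow> \<not> (s \<le> Suc x \<and> Suc x \<le> seg_end p lam s)"
    then have nM: "Suc x \<notin> MM" by (auto simp: MM_def)
    have "?C mod p = 0"
    proof (rule prev0, intro allI impI)
      fix t assume t: "seg_start p lam t"
      show "\<not> (t \<le> x \<and> x \<le> seg_end p lam t) \<or> seg_end p lam t = x"
      proof (cases "t \<le> x \<and> x \<le> seg_end p lam t")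
        case True
        then have "\<not> Suc x \<le> seg_end p lam t" using no t by simp
        then show ?thesis using True by simp
      qed simp
    qed
    then show "card (MM \<inter> {1..Suc x}) mod p = 0" using cardC nM by simp
  qed
qed

lemma lab_nodeof_split:
  assumes "1 \<le> m" "m \<le> NN"
  shows "fst (nodeof m) \<le> snd (nodeof m) \<longleftrightarrow> m \<le> l1"
    and "fst (nodeof m) = snd (nodeof m) \<longleftrightarrow> m = l1"
proof -
  have a: "nodeof m \<in> rim lam" "lab (nodeof m) = m" using nodeof_props assms by auto
  have "snd (nodeof m) \<le> l1" using rim_props(4)[OF a(1)] .
  then show "fst (nodeof m) \<le> snd (nodeof m) \<longleftrightarrow> m \<le> l1"
    "fst (nodeof m) = snd (nodeof m) \<longleftrightarrow> m = l1"
    using a(2) unfolding lab_def by auto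
qed

lemma main_lemma:
  assumes sc: "self_conjugate lam"
    and hk: "\<forall>i. 1 \<le> i \<and> i \<le> kdiag lam \<longrightarrow> \<not> int p dvd hook lam i i"
  shows "(eps_star p lam = 0 \<longleftrightarrow> even (a_star p lam))
       \<and> (even (a_star p lam) \<longleftrightarrow> (\<forall>i. (i, i) \<notin> rim_star p lam))
       \<and> ((\<forall>i. (i, i) \<notin> rim_star p lam) \<longleftrightarrow> p dvd a_star p lam)"
proof -
  define C where "C = card (MM \<inter> {1..l1})"
  have injN: "inj_on nodeof {1..NN}"
    by (rule inj_on_inverseI[where g=lab]) (use nodeof_props in auto)
  have l1N: "l1 \<le> NN" using ne unfolding NN_def by (cases lam) auto
  have prim: "p_rim p lam = nodeof ` MM"
  proof -
    have "p_rim p lam = rim_node lam ` MM" by (auto simp: p_rim_def MM_def)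
    also have "\<dots> = nodeof ` MM" using MM_sub rim_node_eq by (intro image_cong) auto
    finally show ?thesis .
  qed
  have U: "U_set p lam = nodeof ` (MM \<inter> {1..l1})"
  proof -
    have "U_set p lam = {c \<in> nodeof ` MM. fst c \<le> snd c}"
      by (auto simp: U_set_def prim) (metis fst_conv snd_conv)+
    also have "\<dots> = nodeof ` (MM \<inter> {1..l1})"
      using MM_sub lab_nodeof_split(1) by fastforce
    finally show ?thesis .
  qed
  have cU: "card (U_set p lam) = C" unfolding U C_def
    by (rule card_image) (rule inj_on_subset[OF injN], use MM_sub in auto)
  have finU: "finite (U_set p lam)" unfolding U by simp
  have L: "L_set p lam = prod.swap ` U_set p lam" by (force simp: L_set_def)
  have cL: "card (L_set p lam) = C" unfolding L using cU by (simp add: card_image)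
  have finL: "finite (L_set p lam)" unfolding L using finU by simp
  have UL: "U_set p lam \<inter> L_set p lam = (if l1 \<in> MM then {nodeof l1} else {})"
  proof -
    have "U_set p lam \<inter> L_set p lam = {c \<in> U_set p lam. fst c = snd c}"
      unfolding L by (auto simp: U_set_def)
    also have "\<dots> = nodeof ` (MM \<inter> {l1})"
      unfolding U using MM_sub lab_nodeof_split l1N by fastforce
    finally show ?thesis by auto
  qed
  have card_eq: "a_star p lam + (if l1 \<in> MM then 1 else 0) = 2 * C"
    using card_Un_Int[OF finU finL] cU cL UL by (simp add: a_star_def rim_star_def split: if_splits)
  have diag: "(\<forall>i. (i, i) \<notin> rim_star p lam) \<longleftrightarrow> l1 \<notin> MM"
  proof -
    have "(i, i) \<in> rim_star p lam \<longleftrightarrow> (i, i) \<in> U_set p lam" for i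
      by (auto simp: rim_star_def L_set_def)
    moreover have "(i, i) \<in> U_set p lam \<longleftrightarrow> l1 \<in> MM \<and> nodeof l1 = (i, i)" for i
    proof
      assume "(i, i) \<in> U_set p lam"
      then obtain m where m: "m \<in> MM" "nodeof m = (i, i)" unfolding U by (metis IntD1 imageE)
      then have "1 \<le> m" "m \<le> NN" using MM_sub by auto
      then have "m = l1" using lab_nodeof_split(2)[of m] m(2) by simp
      then show "l1 \<in> MM \<and> nodeof l1 = (i, i)" using m by simp
    next
      assume h: "l1 \<in> MM \<and> nodeof l1 = (i, i)"
      then show "(i, i) \<in> U_set p lam" unfolding U using l1_pos by (metis IntI atLeastAtMost_iff image_eqI order_refl)
    qed
    moreover have "l1 \<in> MM \<Longrightarrow> fst (nodeof l1) = snd (nodeof l1)"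
      using lab_nodeof_split(2) l1N l1_pos by blast
    ultimately show ?thesis by (metis prod.collapse)
  qed
  note cnt = count[OF l1N]
  show ?thesis
  proof (cases "l1 \<in> MM")
    case False
    then have "C mod p = 0" using cnt by (auto simp: MM_def C_def)
    then have "p dvd C" by auto
    then show ?thesis using card_eq False diag by (auto simp: eps_star_def)
  next
    case True
    then obtain s where s: "seg_start p lam s" "s \<le> l1" "l1 \<le> seg_end p lam s"
      by (auto simp: MM_def)
    have Cm: "C mod p = (l1 + 1 - s) mod p" using cnt s by (simp add: C_def)
    obtain i where i: "1 \<le> i" "i \<le> length lam" "s = l1 + i - part lam i"
      using start_form[OF s(1)] by blast
    have pil: "part lam i \<le> l1" using part_le_l1 i(1) .
    have ii: "i \<le> part lam i" using s(2) i(3) pil by simp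
    have r: "l1 + 1 - s = part lam i - i + 1" using i(3) ii pil by simp
    have hookv: "hook lam i i = 2 * int (part lam i) - 2 * int i + 1"
      using sc i(1) by (simp add: hook_def self_conjugate_def)
    have kd: "i \<le> kdiag lam"
    proof -
      have "finite {i. 1 \<le> i \<and> i \<le> part lam i}"
        by (rule finite_subset[of _ "{..l1}"]) (use part_le_l1 in force, simp)
      then show ?thesis unfolding kdiag_def using i(1) ii by (simp add: Max_ge)
    qed
    have nd: "\<not> int p dvd 2 * int (part lam i) - 2 * int i + 1"
      using hk i(1) kd hookv by auto
    have C1: "1 \<le> C"
    proof -
      have "l1 \<in> MM \<inter> {1..l1}" using True l1_pos by simp
      then have "MM \<inter> {1..l1} \<noteq> {}" by blast
      then show ?thesis unfolding C_def by (simp add: Suc_le_eq card_gt_0_iff)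
    qed
    have a: "a_star p lam = 2 * C - 1" using card_eq True by simp
    have "\<not> p dvd a_star p lam"
    proof
      assume "p dvd a_star p lam"
      then have d1: "int p dvd 2 * int C - 1" using a C1 by (simp add: of_nat_diff flip: int_dvd_int_iff)
      have "int C mod int p = int (part lam i - i + 1) mod int p"
        using Cm r by (metis of_nat_mod)
      then have "int p dvd int C - int (part lam i - i + 1)"
        by (simp add: mod_eq_dvd_iff)
      then have "int p dvd 2 * (int C - int (part lam i - i + 1))" by (rule dvd_mult)
      then have "int p dvd (2 * int C - 1) - 2 * (int C - int (part lam i - i + 1))"
        using d1 by (rule dvd_diff[rotated])
      moreover have "(2 * int C - 1) - 2 * (int C - int (part lam i - i + 1))
          = 2 * int (part lam i) - 2 * int i + 1" using ii by (simp add: of_nat_diff)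
      ultimately show False using nd by (metis add.commute)
    qed
    moreover have "odd (a_star p lam)" using a C1 by simp
    ultimately show ?thesis using True diag by (auto simp: eps_star_def odd_iff_mod_2_eq_one)
  qed
qed

end

end

theorem corollary3p21:
  fixes p :: nat and lam :: "nat list"
  assumes "prime p" and "odd p"
    and "BG_partition p lam" and "lam \<noteq> []"
  shows "(eps_star p lam = 0 \<longleftrightarrow> even (a_star p lam))
       \<and> (even (a_star p lam) \<longleftrightarrow> (\<forall>i. (i, i) \<notin> rim_star p lam))
       \<and> ((\<forall>i. (i, i) \<notin> rim_star p lam) \<longleftrightarrow> p dvd a_star p lam)"
proof -
  have bg: "is_partition lam" "self_conjugate lam"
    "\<forall>i. 1 \<le> i \<and> i \<le> kdiag lam \<longrightarrow> \<not> int p dvd hook lam i i"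
    using assms(3) by (auto simp: BG_partition_def)
  interpret ptn lam using bg(1) assms(4) by unfold_locales
  have "1 \<le> p" using assms(1) prime_ge_1_nat by blast
  then show ?thesis using main_lemma bg(2,3) by blast
qed

end
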